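(* Let $h\ge 2$ be an integer and let $(X_h,c)$ be the pseudometric space described in the context, with $n=|X_h|$ points. Then: (i) $n \le (h+1)!^3$; (ii) there is an execution of the Reverse Greedy algorithm on $X_h$ (with a suitable tie-breaking) whose final set $R_1$ consists of a single point of the cluster of the root $\rho$; (iii) $\mathrm{cost}(\{\mu\}) < (h+1)!^3$ and $\mathrm{cost}(\{\rho\}) \ge (h-1)(h+1)!^3/8$. Consequently $\mathrm{cost}(R_1)/\min_{x\in X_h}\mathrm{cost}(\{x\}) \ge (h-1)/8$.
   Context: For $x\in X$ and nonempty $F\subseteq X$, $c_{xF}=\min_{f\in F}c_{xf}$, and $\mathrm{cost}(F)=\sum_{x\in X} c_{xF}$. The Reverse Greedy algorithm: set $R_n = X$; for $t = n,\dots,2$, set $R_{t-1} = R_t\setminus\{r_t\}$ where $r_t\in R_t$ minimizes $\mathrm{cost}(R_{t-1})$ (ties broken arbitrarily). Construction of $X_h$: let $T$ be a rooted tree with levels $1,\dots,h$, root $\rho$ at level $h$, leaves at level $1$, in which every node at level $j>1$ has exactly $(j+1)^3$ children (all at level $j-1$). Let $\hat T$ be the graph obtained from $T$ by adding a new node $\mu$ adjacent to every leaf of $T$; all edges have length $1$. The space $X_h$ is obtained by replacing each node $x$ of $T$ at level $j$ by a cluster of $w_j = (j!)^3$ points (one of which is identified with $x$), and $\mu$ by a single point; two points in the same cluster are at distance $0$, and two points in different clusters are at distance equal to the shortest-path distance in $\hat T$ between the corresponding nodes. (Thus distinct points may be at distance $0$, i.e. $c$ is a pseudometric.) $\mathrm{cost}(\{\rho\})$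 and $\mathrm{cost}(\{\mu\})$ denote the costs of a single facility at (a point of the cluster of) $\rho$ and at $\mu$ respectively. *)

theory Defs
  imports Complex_Main
begin

definition dist_set :: "('a \<Rightarrow> 'a \<Rightarrow> real) \<Rightarrow> 'a \<Rightarrow> 'a set \<Rightarrow> real" where
  "dist_set c x F = Min ((\<lambda>f. c x f) ` F)"

definition cost :: "'a set \<Rightarrow> ('a \<Rightarrow> 'a \<Rightarrow> real) \<Rightarrow> 'a set \<Rightarrow> real" where
  "cost X c F = (\<Sum>x\<in>X. dist_set c x F)"

definition reverse_greedy_run :: "'a set \<Rightarrow> ('a \<Rightarrow> 'a \<Rightarrow> real) \<Rightarrow> (nat \<Rightarrow> 'a set) \<Rightarrow> bool" where
  "reverse_greedy_run X c R \<longleftrightarrow>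
     R (card X) = X \<and>
     (\<forall>t. 2 \<le> t \<and> t \<le> card X \<longrightarrow>
        (\<exists>r\<in>R t. R (t - 1) = R t - {r} \<and>
           (\<forall>r'\<in>R t. cost X c (R t - {r}) \<le> cost X c (R t - {r'}))))"

text \<open>Vertices of the graph T-hat: \<open>Some p\<close> is the node of the tree T reached from the root
  by the path p of child indices (root = \<open>Some []\<close>); \<open>None\<close> is the extra node mu. A node at level j > 1 has
  (j+1)^3 children, so the i-th entry (0-indexed) of a path, which selects a child of
  a node at level h - i, is < (h - i + 1)^3.\<close>

type_synonym vertex = "nat list option"

definition valid_path :: "nat \<Rightarrow> nat list \<Rightarrow> bool" where
  "valid_path h p \<longleftrightarrow> length p \<le> h - 1 \<and> (\<forall>i<length p. p ! i < (h - i + 1) ^ 3)"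

definition tree_nodes :: "nat \<Rightarrow> vertex set" where
  "tree_nodes h = {Some p | p. valid_path h p}"

definition level :: "nat \<Rightarrow> nat list \<Rightarrow> nat" where
  "level h p = h - length p"

definition hat_adj :: "nat \<Rightarrow> vertex \<Rightarrow> vertex \<Rightarrow> bool" where
  "hat_adj h u v \<longleftrightarrow>
     (\<exists>p a. valid_path h (p @ [a]) \<and>
        ((u = Some p \<and> v = Some (p @ [a])) \<or> (u = Some (p @ [a]) \<and> v = Some p))) \<or>
     (\<exists>p. valid_path h p \<and> level h p = 1 \<and>
        ((u = None \<and> v = Some p) \<or> (u = Some p \<and> v = None)))"

definition hat_dist :: "nat \<Rightarrow> vertex \<Rightarrow> vertex \<Rightarrow> nat" where
  "hat_dist h u v = (LEAST k. \<exists>w :: nat \<Rightarrow> vertex.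
      w 0 = u \<and> w k = v \<and> (\<forall>i<k. hat_adj h (w i) (w (Suc i))))"

text \<open>The cluster of a tree node at level j
  consists of the (j!)^3 points (Some p, i), i < (j!)^3; the point (Some p, 0) is identified
  with the node itself.\<close>
type_synonym point = "vertex \<times> nat"

definition Xh :: "nat \<Rightarrow> point set" where
  "Xh h = {(Some p, i) | p i. valid_path h p \<and> i < fact (level h p) ^ 3} \<union> {(None, 0)}"

definition ch :: "nat \<Rightarrow> point \<Rightarrow> point \<Rightarrow> real" where
  "ch h x y = (if fst x = fst y then 0 else real (hat_dist h (fst x) (fst y)))"

definition rho :: point where "rho = (Some [], 0)"
definition mu :: point where "mu = (None, 0)"

end

theory Submission
  imports Defs
begin


fun lcp :: "nat list \<Rightarrow> nat list \<Rightarrow> nat" where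
  "lcp (x#xs) (y#ys) = (if x = y then Suc (lcp xs ys) else 0)"
| "lcp _ _ = 0"

lemma lcp_le1: "lcp p q \<le> length p"
  by (induction p q rule: lcp.induct) auto
lemma lcp_le2: "lcp p q \<le> length q"
  by (induction p q rule: lcp.induct) auto
lemma lcp_append_self: "lcp p (p @ s) = length p"
  by (induction p) auto
lemma lcp_append_self2: "lcp (p @ s) p = length p"
  by (induction p) auto
lemma lcp_snoc_ge: "lcp u p \<le> lcp u (p @ [a])"
  by (induction u p rule: lcp.induct) auto
lemma lcp_single: "lcp u [a] \<le> Suc 0"
  by (cases u) auto
lemma lcp_snoc_le: "lcp u (p @ [a]) \<le> Suc (lcp u p)"
  by (induction u p rule: lcp.induct) (auto simp: lcp_single)
lemma lcp_take: "take (lcp p q) p = take (lcp p q) q"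
  by (induction p q rule: lcp.induct) auto
lemma lcp_full: "lcp q v = length v \<Longrightarrow> take (length v) q = v"
  by (induction q v rule: lcp.induct) (auto split: if_splits)
lemma lcp_eq: "lcp p q = length q \<Longrightarrow> length p = length q \<Longrightarrow> p = q"
  using lcp_full[of p q] by simp
lemma lcp_take_self: "k \<le> length q \<Longrightarrow> lcp q (take k q) = k"
  using lcp_append_self2[of "take k q" "drop k q"] by simp

definition Fd :: "nat \<Rightarrow> vertex \<Rightarrow> vertex \<Rightarrow> nat" where
 "Fd h u v = (case u of None \<Rightarrow> (case v of None \<Rightarrow> 0 | Some q \<Rightarrow> h - length q)
   | Some p \<Rightarrow> (case v of None \<Rightarrow> h - length p
       | Some q \<Rightarrow> min (length p + length q - 2 * lcp p q) (2 * h - length p - length q)))"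

definition vv :: "nat \<Rightarrow> vertex \<Rightarrow> bool" where
 "vv h u = (case u of None \<Rightarrow> True | Some p \<Rightarrow> valid_path h p)"

definition walk :: "nat \<Rightarrow> vertex \<Rightarrow> vertex \<Rightarrow> nat \<Rightarrow> bool" where
 "walk h u v k = (\<exists>w. w 0 = u \<and> w k = v \<and> (\<forall>i<k. hat_adj h (w i) (w (Suc i))))"

lemma Fd_refl: "Fd h u u = 0"
  using lcp_append_self[of _ "[]"] by (auto simp: Fd_def split: option.splits)

lemma valid_len: "valid_path h p \<Longrightarrow> length p \<le> h - 1"
  by (simp add: valid_path_def)

lemma Fd_step:
  assumes u: "vv h u" and adj: "hat_adj h x y"
  shows "Fd h u y \<le> Fd h u x + 1"
  using adj unfolding hat_adj_def
proof (elim disjE exE)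
  fix p a assume A: "valid_path h (p @ [a]) \<and> (x = Some p \<and> y = Some (p @ [a]) \<or> x = Some (p @ [a]) \<and> y = Some p)"
  then have va: "valid_path h (p @ [a])" by simp
  then have lp: "length p + 1 \<le> h - 1" by (auto dest: valid_len)
  from A have "x = Some p \<and> y = Some (p @ [a]) \<or> x = Some (p @ [a]) \<and> y = Some p" by simp
  then show ?thesis
  proof
    assume xy: "x = Some p \<and> y = Some (p @ [a])"
    show ?thesis
    proof (cases u)
      case None then show ?thesis using xy lp by (simp add: Fd_def)
    next
      case (Some v)
      with u have lv: "length v \<le> h - 1" by (auto simp: vv_def valid_path_def)
      have "lcp v p \<le> lcp v (p @ [a])" "lcp v (p @ [a]) \<le> Suc (lcp v p)"
        "lcp v p \<le> length v" "lcp v (p@[a]) \<le> length v" "lcp v p \<le> length p"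
        "lcp v (p@[a]) \<le> Suc (length p)"
        using lcp_snoc_ge lcp_snoc_le lcp_le1 lcp_le2[of v "p@[a]"] lcp_le2[of v p] by auto
      then show ?thesis using xy lp lv Some by (simp add: Fd_def min_def) arith
    qed
  next
    assume xy: "x = Some (p @ [a]) \<and> y = Some p"
    show ?thesis
    proof (cases u)
      case None then show ?thesis using xy lp by (simp add: Fd_def)
    next
      case (Some v)
      with u have lv: "length v \<le> h - 1" by (auto simp: vv_def valid_path_def)
      have "lcp v p \<le> lcp v (p @ [a])" "lcp v (p @ [a]) \<le> Suc (lcp v p)"
        "lcp v p \<le> length v" "lcp v (p@[a]) \<le> length v" "lcp v p \<le> length p"
        "lcp v (p@[a]) \<le> Suc (length p)"
        using lcp_snoc_ge lcp_snoc_le lcp_le1 lcp_le2[of v "p@[a]"] lcp_le2[of v p] by auto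
      then show ?thesis using xy lp lv Some by (simp add: Fd_def min_def) arith
    qed
  qed
next
  fix p assume A: "valid_path h p \<and> level h p = 1 \<and> (x = None \<and> y = Some p \<or> x = Some p \<and> y = None)"
  then have vp: "valid_path h p" and lev: "level h p = 1" by auto
  then have lp: "length p = h - 1" "h \<ge> 1" using valid_len[OF vp] by (auto simp: level_def)
  from A have "x = None \<and> y = Some p \<or> x = Some p \<and> y = None" by simp
  then show ?thesis
  proof
    assume xy: "x = None \<and> y = Some p"
    show ?thesis
    proof (cases u)
      case None then show ?thesis using xy lp by (simp add: Fd_def)
    next
      case (Some v)
      with u have lv: "length v \<le> h - 1" by (auto simp: vv_def valid_path_def)
      then show ?thesis using xy lp Some by (simp add: Fd_def min_def) arith
    qed
  next
    assume xy: "x = Some p \<and> y = None"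
    show ?thesis
    proof (cases u)
      case None then show ?thesis using xy lp by (simp add: Fd_def)
    next
      case (Some v)
      with u have lv: "length v \<le> h - 1" by (auto simp: vv_def valid_path_def)
      have "lcp v p \<le> length v" using lcp_le1 by auto
      then show ?thesis using xy lp lv Some by (simp add: Fd_def min_def) arith
    qed
  qed
qed

lemma walk_lower:
  assumes u: "vv h u" and w: "walk h u v k"
  shows "Fd h u v \<le> k"
proof -
  obtain w where w0: "w 0 = u" and wk: "w k = v" and st: "\<forall>i<k. hat_adj h (w i) (w (Suc i))"
    using w unfolding walk_def by blast
  have "\<forall>i\<le>k. Fd h u (w i) \<le> i"
  proof (intro allI impI)
    fix i assume "i \<le> k" then show "Fd h u (w i) \<le> i"
    proof (induction i)
      case 0 then show ?case using w0 Fd_refl by simp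
    next
      case (Suc i)
      then have "Fd h u (w (Suc i)) \<le> Fd h u (w i) + 1" using st u Fd_step by auto
      then show ?case using Suc by auto
    qed
  qed
  then show ?thesis using wk by auto
qed

lemma hat_adj_sym: "hat_adj h u v = hat_adj h v u"
  unfolding hat_adj_def by blast

lemma walk_refl: "walk h u u 0"
  unfolding walk_def by (rule exI[of _ "\<lambda>_. u"]) simp

lemma walk_edge: "hat_adj h u v \<Longrightarrow> walk h u v 1"
  unfolding walk_def by (rule exI[of _ "\<lambda>i. if i = 0 then u else v"]) simp

lemma walk_trans:
  assumes "walk h u v k1" "walk h v x k2" shows "walk h u x (k1 + k2)"
proof -
  obtain w1 where a: "w1 0 = u" "w1 k1 = v" "\<forall>i<k1. hat_adj h (w1 i) (w1 (Suc i))"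
    using assms(1) unfolding walk_def by blast
  obtain w2 where b: "w2 0 = v" "w2 k2 = x" "\<forall>i<k2. hat_adj h (w2 i) (w2 (Suc i))"
    using assms(2) unfolding walk_def by blast
  define w where "w i = (if i \<le> k1 then w1 i else w2 (i - k1))" for i
  have "\<forall>i<k1+k2. hat_adj h (w i) (w (Suc i))"
  proof (intro allI impI)
    fix i assume i: "i < k1 + k2"
    show "hat_adj h (w i) (w (Suc i))"
    proof (cases "i < k1")
      case True then show ?thesis using a by (auto simp: w_def)
    next
      case False
      then have "i - k1 < k2" "Suc i - k1 = Suc (i - k1)" using i by auto
      then show ?thesis using b a False by (auto simp: w_def)
    qed
  qed
  moreover have "w 0 = u" "w (k1+k2) = x" using a b by (auto simp: w_def)
  ultimately show ?thesis unfolding walk_def by blast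
qed

lemma walk_sym:
  assumes "walk h u v k" shows "walk h v u k"
proof -
  obtain w where a: "w 0 = u" "w k = v" "\<forall>i<k. hat_adj h (w i) (w (Suc i))"
    using assms unfolding walk_def by blast
  define w' where "w' i = w (k - i)" for i
  have "\<forall>i<k. hat_adj h (w' i) (w' (Suc i))"
  proof (intro allI impI)
    fix i assume i: "i < k"
    then have e: "k - i = Suc (k - Suc i)" by auto
    have "hat_adj h (w (k - Suc i)) (w (Suc (k - Suc i)))" using a(3) i by auto
    then show "hat_adj h (w' i) (w' (Suc i))" using e hat_adj_sym unfolding w'_def by simp
  qed
  moreover have "w' 0 = v" "w' k = u" using a by (auto simp: w'_def)
  ultimately show ?thesis unfolding walk_def by blast
qed

lemma valid_take: "valid_path h p \<Longrightarrow> valid_path h (take k p)"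
  by (auto simp: valid_path_def)

lemma valid_zeros:
  assumes "valid_path h p" "length p + m \<le> h - 1"
  shows "valid_path h (p @ replicate m 0)"
  using assms by (auto simp: valid_path_def nth_append)

lemma walk_up:
  assumes vp: "valid_path h p" and k: "k \<le> length p"
  shows "walk h (Some p) (Some (take k p)) (length p - k)"
proof -
  define w where "w i = Some (take (length p - i) p)" for i
  have "\<forall>i<length p - k. hat_adj h (w i) (w (Suc i))"
  proof (intro allI impI)
    fix i assume i: "i < length p - k"
    define m where "m = length p - Suc i"
    have m: "m < length p" "length p - i = Suc m" using i by (auto simp: m_def)
    have e: "take (Suc m) p = take m p @ [p ! m]" using m by (simp add: take_Suc_conv_app_nth)
    have "valid_path h (take m p @ [p ! m])" using valid_take[OF vp, of "Suc m"] e by simp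
    moreover have "w i = Some (take m p @ [p!m])" "w (Suc i) = Some (take m p)"
      using m e by (auto simp: w_def m_def)
    ultimately show "hat_adj h (w i) (w (Suc i))" unfolding hat_adj_def by blast
  qed
  moreover have "w 0 = Some p" "w (length p - k) = Some (take k p)" using k by (auto simp: w_def)
  ultimately show ?thesis unfolding walk_def by blast
qed

lemma walk_to_mu:
  assumes vp: "valid_path h p" and h: "h \<ge> 1"
  shows "walk h (Some p) None (h - length p)"
proof -
  have lp: "length p \<le> h - 1" using valid_len[OF vp] .
  define pz where "pz = p @ replicate (h - 1 - length p) 0"
  have vz: "valid_path h pz" unfolding pz_def using valid_zeros[OF vp] lp by simp
  have lz: "length pz = h - 1" using lp by (simp add: pz_def)
  have "walk h (Some pz) (Some (take (length p) pz)) (length pz - length p)"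
    using walk_up[OF vz] lz lp by simp
  then have w1: "walk h (Some p) (Some pz) (h - 1 - length p)"
    using lz by (auto simp: pz_def intro: walk_sym)
  have "hat_adj h (Some pz) None" unfolding hat_adj_def using vz lz h by (auto simp: level_def)
  then have "walk h (Some p) None (h - 1 - length p + 1)" using walk_trans[OF w1 walk_edge] by blast
  moreover have "h - 1 - length p + 1 = h - length p" using lp h by arith
  ultimately show ?thesis by simp
qed

lemma walk_Fd:
  assumes u: "vv h u" and v: "vv h v" and h: "h \<ge> 1"
  shows "walk h u v (Fd h u v)"
proof (cases u)
  case None
  then show ?thesis
  proof (cases v)
    case None then show ?thesis using \<open>u = None\<close> walk_refl by (simp add: Fd_def)
  next
    case (Some q)
    then show ?thesis using \<open>u = None\<close> v walk_sym[OF walk_to_mu] h by (simp add: Fd_def vv_def)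
  qed
next
  case (Some p)
  have vp: "valid_path h p" using u Some by (simp add: vv_def)
  show ?thesis
  proof (cases v)
    case None then show ?thesis using Some vp walk_to_mu h by (simp add: Fd_def)
  next
    case (Some q)
    have vq: "valid_path h q" using v Some by (simp add: vv_def)
    have lp: "length p \<le> h - 1" "length q \<le> h - 1" using vp vq valid_len by auto
    define L where "L = lcp p q"
    have L: "L \<le> length p" "L \<le> length q" using lcp_le1 lcp_le2 by (auto simp: L_def)
    have tw: "walk h (Some p) (Some q) (length p + length q - 2 * lcp p q)"
    proof -
      have w1: "walk h (Some p) (Some (take L p)) (length p - L)" using walk_up[OF vp L(1)] .
      have w2: "walk h (Some q) (Some (take L p)) (length q - L)"
        using walk_up[OF vq L(2)] lcp_take[of p q] by (simp add: L_def)
      have "walk h (Some p) (Some q) (length p - L + (length q - L))"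
        using walk_trans[OF w1 walk_sym[OF w2]] .
      moreover have "length p - L + (length q - L) = length p + length q - 2 * lcp p q"
        using L by (simp add: L_def)
      ultimately show ?thesis by simp
    qed
    have mw: "walk h (Some p) (Some q) (2 * h - length p - length q)"
    proof -
      have "walk h (Some p) (Some q) (h - length p + (h - length q))"
        using walk_trans[OF walk_to_mu[OF vp h] walk_sym[OF walk_to_mu[OF vq h]]] .
      moreover have "h - length p + (h - length q) = 2 * h - length p - length q" using lp by simp
      ultimately show ?thesis by simp
    qed
    show ?thesis using tw mw \<open>u = Some p\<close> Some by (simp add: Fd_def min_def)
  qed
qed

lemma hat_dist_eq:
  assumes "vv h u" "vv h v" "h \<ge> 1"
  shows "hat_dist h u v = Fd h u v"
proof -
  have "hat_dist h u v = (LEAST k. walk h u v k)" unfolding hat_dist_def walk_def by simp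
  also have "\<dots> = Fd h u v"
    by (rule Least_equality) (use walk_Fd[OF assms] walk_lower[OF assms(1)] in auto)
  finally show ?thesis .
qed

lemma Fd_pos:
  assumes "vv h u" "vv h v" "u \<noteq> v" "h \<ge> 1"
  shows "Fd h u v \<ge> 1"
proof (cases u)
  case None
  then obtain q where "v = Some q" using assms by (cases v) auto
  then show ?thesis using None assms valid_len[of h q] by (auto simp: Fd_def vv_def)
next
  case (Some p)
  show ?thesis
  proof (cases v)
    case None then show ?thesis using Some assms valid_len[of h p] by (auto simp: Fd_def vv_def)
  next
    case (Some q)
    have lp: "length p \<le> h - 1" "length q \<le> h - 1" using assms Some \<open>u = Some p\<close> valid_len
      by (auto simp: vv_def)
    have L: "lcp p q \<le> length p" "lcp p q \<le> length q" using lcp_le1 lcp_le2 by auto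
    have "p \<noteq> q" using assms Some \<open>u = Some p\<close> by auto
    then have "length p + length q - 2 * lcp p q \<noteq> 0"
      using L lcp_eq[of p q] by auto
    then show ?thesis using lp assms(4) Some \<open>u = Some p\<close> by (auto simp: Fd_def min_def)
  qed
qed



definition VP :: "nat \<Rightarrow> nat list set" where "VP h = {p. valid_path h p}"

lemma finite_VP: "finite (VP h)"
proof -
  have "VP h \<subseteq> {xs. set xs \<subseteq> {..<(h+1)^3} \<and> length xs \<le> h}"
  proof
    fix p assume "p \<in> VP h"
    then have v: "valid_path h p" by (simp add: VP_def)
    have "set p \<subseteq> {..<(h+1)^3}"
    proof
      fix x assume "x \<in> set p"
      then obtain i where i: "i < length p" "x = p ! i" by (auto simp: in_set_conv_nth)
      then have "x < (h - i + 1)^3" using v by (simp add: valid_path_def)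
      also have "\<dots> \<le> (h+1)^3" by (rule power_mono) auto
      finally show "x \<in> {..<(h+1)^3}" by simp
    qed
    then show "p \<in> {xs. set xs \<subseteq> {..<(h+1)^3} \<and> length xs \<le> h}" using v
      by (auto simp: valid_path_def)
  qed
  moreover have "finite {xs. set xs \<subseteq> {..<(h+1)^3} \<and> length xs \<le> h}"
    by (rule finite_lists_length_le) simp
  ultimately show ?thesis by (rule finite_subset)
qed

lemma Xh_repr: "Xh h = (\<lambda>(p,i). (Some p, i)) ` (SIGMA p:VP h. {..< fact (level h p) ^ 3 :: nat}) \<union> {(None, 0)}"
  unfolding Xh_def VP_def by auto

lemma finite_Xh: "finite (Xh h)"
proof -
  have finS: "finite (SIGMA p:VP h. {..< fact (level h p) ^ 3 :: nat})" by (rule finite_SigmaI[OF finite_VP]) simp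
  then show ?thesis unfolding Xh_repr by simp
qed

lemma Xh_vv: "x \<in> Xh h \<Longrightarrow> vv h (fst x)"
  unfolding Xh_def vv_def by auto

lemma sum_Xh:
  fixes g :: "vertex \<Rightarrow> real"
  shows "(\<Sum>x\<in>Xh h. g (fst x)) = (\<Sum>p\<in>VP h. (fact (level h p))^3 * g (Some p)) + g None"
proof -
  let ?S = "SIGMA p:VP h. {..< fact (level h p) ^ 3 :: nat}"
  let ?f = "\<lambda>(p,i). (Some p, i)"
  have inj: "inj_on ?f ?S" by (auto simp: inj_on_def)
  have finS: "finite ?S" by (rule finite_SigmaI[OF finite_VP]) simp
  have fin: "finite (?f ` ?S)" using finS by simp
  have disj: "?f ` ?S \<inter> {(None, 0)} = {}" by auto
  have "(\<Sum>x\<in>Xh h. g (fst x)) = (\<Sum>x\<in>?f ` ?S. g (fst x)) + g None"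
    unfolding Xh_repr by (subst sum.union_disjoint[OF fin _ disj]) auto
  also have "(\<Sum>x\<in>?f ` ?S. g (fst x)) = (\<Sum>(p,i)\<in>?S. g (Some p))"
    by (subst sum.reindex[OF inj]) (auto intro!: sum.cong)
  also have "\<dots> = (\<Sum>p\<in>VP h. \<Sum>i\<in>{..< fact (level h p) ^ 3 :: nat}. g (Some p))"
    by (rule sum.Sigma[symmetric]) (auto simp: finite_VP)
  also have "\<dots> = (\<Sum>p\<in>VP h. (fact (level h p))^3 * g (Some p))"
    by (rule sum.cong) auto
  finally show ?thesis .
qed

definition subtree :: "nat \<Rightarrow> nat list \<Rightarrow> nat list set" where
  "subtree h a = {q \<in> VP h. take (length a) q = a}"

fun sub :: "(nat \<Rightarrow> real) \<Rightarrow> nat \<Rightarrow> real" where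
  "sub f 0 = 0"
| "sub f (Suc 0) = f 1"
| "sub f (Suc (Suc n)) = f (Suc (Suc n)) + real ((n+3)^3) * sub f (Suc n)"

lemma subtree_sum_aux:
  assumes h: "h \<ge> 1"
  shows "valid_path h a \<Longrightarrow> level h a = Suc n \<Longrightarrow> (\<Sum>q\<in>subtree h a. f (level h q)) = sub f (level h a)"
proof (induction n arbitrary: a)
  case 0
  then have la: "length a = h - 1" using valid_len[OF 0(1)] by (auto simp: level_def)
  have "subtree h a = {a}"
  proof
    show "subtree h a \<subseteq> {a}"
    proof
      fix q assume "q \<in> subtree h a"
      then have "valid_path h q" "take (length a) q = a" by (auto simp: subtree_def VP_def)
      then show "q \<in> {a}" using valid_len[of h q] la by auto
    qed
    show "{a} \<subseteq> subtree h a" using 0 by (auto simp: subtree_def VP_def)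
  qed
  then show ?case using 0 by simp
next
  case (Suc n)
  have la: "length a = h - Suc (Suc n)" "h \<ge> Suc (Suc n)" using Suc.prems valid_len[OF Suc.prems(1)]
    by (auto simp: level_def)
  have vc: "valid_path h (a @ [c])" if "c < (n+3)^3" for c
  proof -
    have e: "h - length a + 1 = n + 3" using la by simp
    have e2: "n + 3 = Suc (Suc (Suc n))" by arith
    show ?thesis using Suc.prems(1) la that e e2 unfolding valid_path_def
      by (auto simp: nth_append less_Suc_eq)
  qed
  have lc: "level h (a @ [c]) = Suc n" for c using la by (simp add: level_def)
  have dec: "subtree h a = insert a (\<Union>c\<in>{..<(n+3)^3}. subtree h (a @ [c]))"
  proof
    show "subtree h a \<subseteq> insert a (\<Union>c\<in>{..<(n+3)^3}. subtree h (a @ [c]))"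
    proof
      fix q assume q: "q \<in> subtree h a"
      then have vq: "valid_path h q" and tq: "take (length a) q = a" by (auto simp: subtree_def VP_def)
      show "q \<in> insert a (\<Union>c\<in>{..<(n+3)^3}. subtree h (a @ [c]))"
      proof (cases "length q \<le> length a")
        case True then show ?thesis using tq by auto
      next
        case False
        then have "take (Suc (length a)) q = a @ [q ! length a]"
          using tq by (simp add: take_Suc_conv_app_nth)
        moreover have "q ! length a < (n+3)^3"
        proof -
          have "q ! length a < (h - length a + 1)^3" using vq False by (simp add: valid_path_def)
          moreover have "h - length a + 1 = n + 3" using la by simp
          ultimately show ?thesis by metis
        qed
        ultimately show ?thesis using vq by (auto simp: subtree_def VP_def)
      qed
    qed
    show "insert a (\<Union>c\<in>{..<(n+3)^3}. subtree h (a @ [c])) \<subseteq> subtree h a"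
    proof
      fix q assume "q \<in> insert a (\<Union>c\<in>{..<(n+3)^3}. subtree h (a @ [c]))"
      then show "q \<in> subtree h a"
      proof
        assume "q = a" then show ?thesis using Suc.prems by (simp add: subtree_def VP_def)
      next
        assume "q \<in> (\<Union>c\<in>{..<(n+3)^3}. subtree h (a @ [c]))"
        then obtain c where "take (Suc (length a)) q = a @ [c]" "valid_path h q"
          by (auto simp: subtree_def VP_def)
        then have "take (length a) (take (Suc (length a)) q) = a" by simp
        then show ?thesis using \<open>valid_path h q\<close> by (simp add: subtree_def VP_def min_def)
      qed
    qed
  qed
  have finsub: "finite (subtree h b)" for b using finite_VP by (simp add: subtree_def)
  have notin: "a \<notin> (\<Union>c\<in>{..<(n+3)^3}. subtree h (a @ [c]))"
    by (auto simp: subtree_def)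
  have disj: "pairwise (\<lambda>c c'. subtree h (a @ [c]) \<inter> subtree h (a @ [c']) = {}) {..<(n+3)^3}"
    by (auto simp: pairwise_def subtree_def)
  have "(\<Sum>q\<in>subtree h a. f (level h q)) = f (level h a) + (\<Sum>q\<in>(\<Union>c\<in>{..<(n+3)^3}. subtree h (a @ [c])). f (level h q))"
    unfolding dec using notin finsub by (subst sum.insert) auto
  also have "(\<Sum>q\<in>(\<Union>c\<in>{..<(n+3)^3}. subtree h (a @ [c])). f (level h q)) = (\<Sum>c\<in>{..<(n+3)^3}. \<Sum>q\<in>subtree h (a @ [c]). f (level h q))"
    by (rule sum.UNION_disjoint) (use finsub in \<open>auto simp: subtree_def finite_VP\<close>)
  also have "\<dots> = (\<Sum>c\<in>{..<(n+3)^3}. sub f (Suc n))"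
    using Suc.IH[OF vc lc] lc by (intro sum.cong) auto
  also have "\<dots> = real ((n+3)^3) * sub f (Suc n)" by simp
  finally show ?case using Suc.prems by simp
qed

lemma subtree_sum:
  assumes "h \<ge> 1" "valid_path h a"
  shows "(\<Sum>q\<in>subtree h a. f (level h q)) = sub f (level h a)"
proof -
  have "level h a \<ge> 1" using assms valid_len[OF assms(2)] by (auto simp: level_def)
  then obtain n where "level h a = Suc n" by (cases "level h a") auto
  then show ?thesis using subtree_sum_aux assms by blast
qed

lemma subtree_root: "subtree h [] = VP h"
  by (simp add: subtree_def)

lemma level_root: "level h [] = h" by (simp add: level_def)



definition wt :: "nat \<Rightarrow> real" where "wt k = (fact k)^3"

lemma fact_ss: "(fact (Suc (Suc (Suc n))) :: real) = real (n+3) * fact (Suc (Suc n))"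
  by (simp add: fact_Suc)

lemma sub_w_bound_aux: "2 * real (n+2) * sub wt (Suc n) \<le> real (n+1) * (fact (n+2))^3"
proof (induction n)
  case 0 then show ?case by (simp add: wt_def)
next
  case (Suc n)
  define x where "x = real n"
  define S where "S = sub wt (Suc n)"
  define G where "G = (fact (Suc (Suc n)) :: real)^3"
  have x: "x \<ge> 0" by (simp add: x_def)
  have G: "G \<ge> 0" by (simp add: G_def)
  have IH: "2 * (x+2) * S \<le> (x+1) * G" using Suc.IH by (simp add: x_def S_def G_def algebra_simps)
  have e1: "sub wt (Suc (Suc n)) = G + (x+3)^3 * S"
    by (simp add: x_def S_def G_def wt_def add.commute)
  have e2: "(fact (Suc n + 2) :: real)^3 = (x+3)^3 * G"
    by (simp add: G_def x_def fact_Suc power_mult_distrib add.commute)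
  have poly: "2*(x+2)*(x+3) + (x+3)^4*(x+1) \<le> (x+2)^2*(x+3)^3"
  proof -
    have "(x+2)^2*(x+3)^3 - ((x+3)^4*(x+1) + 2*(x+2)*(x+3)) = (x+3)*(x^2+4*x+5)"
      by (simp add: algebra_simps power2_eq_square power3_eq_cube power4_eq_xxxx)
    moreover have "(x+3)*(x^2+4*x+5) \<ge> 0" using x by simp
    ultimately show ?thesis by linarith
  qed
  have a: "(x+3)^4 * (2*(x+2)*S) \<le> (x+3)^4 * ((x+1)*G)"
    using IH by (rule mult_left_mono) (use x in simp)
  have b: "(2*(x+2)*(x+3) + (x+3)^4*(x+1)) * G \<le> (x+2)^2*(x+3)^3 * G"
    using poly G by (rule mult_right_mono)
  have "(x+2) * (2 * (x+3) * (G + (x+3)^3 * S)) \<le> (x+2) * ((x+2) * ((x+3)^3 * G))"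
  proof -
    have "(x+2) * (2 * (x+3) * (G + (x+3)^3 * S)) = 2*(x+2)*(x+3)*G + (x+3)^4 * (2*(x+2)*S)"
      by (simp add: algebra_simps power3_eq_cube power4_eq_xxxx)
    moreover have "(x+3)^4 * ((x+1)*G) + 2*(x+2)*(x+3)*G = (2*(x+2)*(x+3) + (x+3)^4*(x+1)) * G"
      by (simp add: algebra_simps)
    moreover have "(x+2) * ((x+2) * ((x+3)^3 * G)) = (x+2)^2*(x+3)^3 * G"
      by (simp add: algebra_simps power2_eq_square)
    ultimately show ?thesis using a b by linarith
  qed
  then have "2 * (x+3) * (G + (x+3)^3 * S) \<le> (x+2) * ((x+3)^3 * G)"
    using x by (simp add: mult_le_cancel_left_pos)
  then show ?case using e1 e2 by (simp add: x_def algebra_simps)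
qed

lemma sub_w_bound:
  assumes "j \<ge> 1" shows "sub wt j + 1 \<le> (fact (j+1))^3"
proof -
  obtain n where j: "j = Suc n" using assms by (cases j) auto
  have A: "2 * real (n+2) * sub wt (Suc n) \<le> real (n+1) * (fact (n+2))^3" by (rule sub_w_bound_aux)
  define G where "G = (fact (n+2) :: real)^3"
  have G8: "G \<ge> 8"
  proof -
    have "(fact 2 :: real) \<le> fact (n+2)" by (rule fact_mono) auto
    then have "(2::real) \<le> fact (n+2)" by simp
    then have "(2::real)^3 \<le> (fact (n+2))^3" by (rule power_mono) auto
    then show ?thesis by (simp add: G_def)
  qed
  have "sub wt (Suc n) * (2 * real (n+2)) \<le> real (n+1) * G" using A by (simp add: G_def algebra_simps)
  then have "sub wt (Suc n) \<le> real (n+1) * G / (2 * real (n+2))"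
    by (simp add: pos_le_divide_eq)
  also have "\<dots> \<le> G / 2"
    using G8 by (simp add: field_simps)
  finally show ?thesis using G8 j by (simp add: G_def)
qed

definition wl :: "nat \<Rightarrow> real" where "wl k = (fact k)^3 * real k"

lemma sub_wl_bound_aux: "real (n+2) * sub wl (Suc n) \<le> real (n+1) * (fact (n+2))^3"
proof (induction n)
  case 0 then show ?case by (simp add: wl_def)
next
  case (Suc n)
  define x where "x = real n"
  define S where "S = sub wl (Suc n)"
  define G where "G = (fact (Suc (Suc n)) :: real)^3"
  have x: "x \<ge> 0" by (simp add: x_def)
  have G: "G \<ge> 0" by (simp add: G_def)
  have IH: "(x+2) * S \<le> (x+1) * G" using Suc.IH by (simp add: x_def S_def G_def algebra_simps)
  have e1: "sub wl (Suc (Suc n)) = G * (x+2) + (x+3)^3 * S"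
    by (simp add: x_def S_def G_def wl_def add.commute)
  have e2: "(fact (Suc n + 2) :: real)^3 = (x+3)^3 * G"
    by (simp add: G_def x_def fact_Suc power_mult_distrib add.commute)
  have poly: "(x+2)^2*(x+3) + (x+3)^4*(x+1) \<le> (x+2)^2*(x+3)^3"
  proof -
    have "(x+2)^2*(x+3)^3 - ((x+3)^4*(x+1) + (x+2)^2*(x+3)) = (x+3)*(2*x+5)"
      by (simp add: algebra_simps power2_eq_square power3_eq_cube power4_eq_xxxx)
    moreover have "(x+3)*(2*x+5) \<ge> 0" using x by simp
    ultimately show ?thesis by linarith
  qed
  have a: "(x+3)^4 * ((x+2)*S) \<le> (x+3)^4 * ((x+1)*G)"
    using IH by (rule mult_left_mono) (use x in simp)
  have b: "((x+2)^2*(x+3) + (x+3)^4*(x+1)) * G \<le> (x+2)^2*(x+3)^3 * G"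
    using poly G by (rule mult_right_mono)
  have "(x+2) * ((x+3) * (G * (x+2) + (x+3)^3 * S)) \<le> (x+2) * ((x+2) * ((x+3)^3 * G))"
  proof -
    have "(x+2) * ((x+3) * (G * (x+2) + (x+3)^3 * S)) = (x+2)^2*(x+3)*G + (x+3)^4 * ((x+2)*S)"
      by (simp add: algebra_simps power2_eq_square power3_eq_cube power4_eq_xxxx)
    moreover have "(x+3)^4 * ((x+1)*G) + (x+2)^2*(x+3)*G = ((x+2)^2*(x+3) + (x+3)^4*(x+1)) * G"
      by (simp add: algebra_simps)
    moreover have "(x+2) * ((x+2) * ((x+3)^3 * G)) = (x+2)^2*(x+3)^3 * G"
      by (simp add: algebra_simps power2_eq_square)
    ultimately show ?thesis using a b by linarith
  qed
  then have "(x+3) * (G * (x+2) + (x+3)^3 * S) \<le> (x+2) * ((x+3)^3 * G)"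
    using x by (simp add: mult_le_cancel_left_pos)
  then show ?case using e1 e2 by (simp add: x_def algebra_simps)
qed

lemma sub_wl_bound:
  assumes "j \<ge> 1" shows "sub wl j < (fact (j+1))^3"
proof -
  obtain n where j: "j = Suc n" using assms by (cases j) auto
  have A: "real (n+2) * sub wl (Suc n) \<le> real (n+1) * (fact (n+2))^3" by (rule sub_wl_bound_aux)
  define G where "G = (fact (n+2) :: real)^3"
  have G: "G > 0" by (simp add: G_def)
  have "sub wl (Suc n) * real (n+2) \<le> real (n+1) * G" using A by (simp add: G_def algebra_simps)
  then have "sub wl (Suc n) \<le> real (n+1) * G / real (n+2)"
    by (simp add: pos_le_divide_eq)
  also have "\<dots> < G"
    using G by (simp add: field_simps)
  finally show ?thesis using j by (simp add: G_def)
qed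

definition ind1 :: "nat \<Rightarrow> real" where "ind1 k = (if k = 1 then 1 else 0)"

lemma sub_ind: "8 * sub ind1 (Suc n) = (fact (n+2))^3"
proof (induction n)
  case 0 then show ?case by (simp add: ind1_def)
next
  case (Suc n)
  have "8 * sub ind1 (Suc (Suc n)) = real ((n+3)^3) * (8 * sub ind1 (Suc n))" by (simp add: ind1_def)
  also have "\<dots> = real ((n+3)^3) * (fact (n+2))^3" using Suc.IH by simp
  also have "\<dots> = (real (n+3) * fact (n+2))^3" by (simp add: power_mult_distrib)
  also have "real (n+3) * fact (n+2) = (fact (Suc n + 2) :: real)"
    by (simp add: fact_Suc)
  finally show ?case .
qed



lemma ch_eq: "vv h (fst x) \<Longrightarrow> vv h (fst y) \<Longrightarrow> h \<ge> 1 \<Longrightarrow> ch h x y = real (Fd h (fst x) (fst y))"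
  by (auto simp: ch_def hat_dist_eq Fd_refl)

lemma Fd_SS: "Fd h (Some p) (Some q) = min (length p + length q - 2 * lcp p q) (2*h - length p - length q)"
  by (simp add: Fd_def)

definition Vset :: "nat \<Rightarrow> nat \<Rightarrow> nat list set \<Rightarrow> nat list set" where
  "Vset h j B = {p \<in> VP h. j < level h p} \<union> B"

definition Spts :: "nat \<Rightarrow> nat \<Rightarrow> nat list set \<Rightarrow> point set" where
  "Spts h j B = (\<lambda>p. (Some p, 0::nat)) ` Vset h j B"

definition delta :: "nat \<Rightarrow> nat \<Rightarrow> nat list set \<Rightarrow> vertex \<Rightarrow> nat" where
 "delta h j B u = (case u of None \<Rightarrow> (if B = {} then j + 1 else j)
    | Some q \<Rightarrow> (if j < level h q then 0 else if level h q = j then (if q \<in> B then 0 else 1)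
        else (if take (h - j) q \<in> B then j - level h q else j - level h q + 1)))"

locale cfg =
  fixes h j :: nat and B :: "nat list set"
  assumes h: "h \<ge> 1" and j1: "1 \<le> j" and jh: "j \<le> h"
    and B: "B \<subseteq> {p \<in> VP h. level h p = j}"
begin

lemma Bmem: "b \<in> B \<Longrightarrow> valid_path h b \<and> length b = h - j"
  using B valid_len[of h b] jh j1 by (auto simp: VP_def level_def)

lemma Vmem: "v \<in> Vset h j B \<Longrightarrow> valid_path h v \<and> length v \<le> h - j \<and> (length v = h - j \<longrightarrow> v \<in> B)"
  using Bmem by (auto simp: Vset_def VP_def level_def)

lemma jh_B: "j = h \<Longrightarrow> b \<in> B \<Longrightarrow> b = []"
  using Bmem by auto

lemma finV: "finite (Vset h j B)"
proof -
  have "Vset h j B \<subseteq> VP h" using B by (auto simp: Vset_def)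
  then show ?thesis using finite_VP finite_subset by blast
qed

lemma min_None:
  assumes ne: "B \<noteq> {} \<or> j < h"
  shows "(\<exists>v\<in>Vset h j B. Fd h None (Some v) = delta h j B None) \<and> (\<forall>v\<in>Vset h j B. delta h j B None \<le> Fd h None (Some v))"
proof
  show "\<exists>v\<in>Vset h j B. Fd h None (Some v) = delta h j B None"
  proof (cases "B = {}")
    case False
    then obtain b where b: "b \<in> B" by auto
    then show ?thesis using Bmem[OF b] jh False by (intro bexI[of _ b]) (auto simp: Fd_def delta_def Vset_def)
  next
    case True
    then have jlt: "j < h" using ne by auto
    define v0 where "v0 = replicate (h - j - 1) (0::nat)"
    have "valid_path h ([] @ v0)" unfolding v0_def by (rule valid_zeros) (auto simp: valid_path_def)
    then have "valid_path h v0" by simp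
    moreover have "length v0 = h - j - 1" by (simp add: v0_def)
    ultimately have "v0 \<in> Vset h j B" "Fd h None (Some v0) = j + 1"
      using jlt by (auto simp: Vset_def VP_def level_def Fd_def)
    then show ?thesis using True by (auto simp: delta_def)
  qed
  show "\<forall>v\<in>Vset h j B. delta h j B None \<le> Fd h None (Some v)"
  proof
    fix v assume v: "v \<in> Vset h j B"
    then have "length v \<le> h - j" "B = {} \<longrightarrow> length v < h - j" using Vmem[OF v] by auto
    then show "delta h j B None \<le> Fd h None (Some v)" using jh by (auto simp: delta_def Fd_def)
  qed
qed

lemma min_Some:
  assumes ne: "B \<noteq> {} \<or> j < h" and vq: "valid_path h q"
  shows "(\<exists>v\<in>Vset h j B. Fd h (Some q) (Some v) = delta h j B (Some q)) \<and> (\<forall>v\<in>Vset h j B. delta h j B (Some q) \<le> Fd h (Some q) (Some v))"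
proof -
  define n where "n = length q"
  have nh: "n \<le> h - 1" using valid_len[OF vq] by (simp add: n_def)
  have lq: "level h q = h - n" by (simp add: level_def n_def)
  show ?thesis
  proof (cases "j < level h q")
    case True
    then have "q \<in> Vset h j B" using vq by (auto simp: Vset_def VP_def)
    then show ?thesis using True by (intro conjI bexI[of _ q]) (auto simp: delta_def Fd_refl)
  next
    case False
    show ?thesis
    proof (cases "level h q = j")
      case True
      then have n: "n = h - j" using lq jh nh by auto
      show ?thesis
      proof (cases "q \<in> B")
        case True
        then have "q \<in> Vset h j B" by (auto simp: Vset_def)
        then show ?thesis using True \<open>level h q = j\<close> by (intro conjI bexI[of _ q]) (auto simp: delta_def Fd_refl)
      next
        case qB: False
        have jlt: "j < h"
        proof (rule ccontr)
          assume "\<not> j < h" then have "j = h" using jh by auto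
          then have "q = []" using n by (simp add: n_def)
          moreover obtain b where "b \<in> B" using ne \<open>j = h\<close> by auto
          ultimately show False using jh_B[OF \<open>j = h\<close>] qB by auto
        qed
        have d: "delta h j B (Some q) = 1" using qB True by (simp add: delta_def)
        define v where "v = take (n - 1) q"
        have vv: "valid_path h v" using valid_take[OF vq] by (simp add: v_def)
        have lv: "length v = n - 1" "n \<ge> 1" using n jlt by (auto simp: v_def n_def)
        have "v \<in> Vset h j B" using vv lv n jlt by (auto simp: Vset_def VP_def level_def)
        moreover have "Fd h (Some q) (Some v) = 1"
        proof -
          have "lcp q v = n - 1" using lcp_take_self[of "n-1" q] by (simp add: v_def n_def)
          then show ?thesis using lv nh by (simp add: Fd_SS n_def min_def) arith
        qed
        moreover have "\<forall>v\<in>Vset h j B. 1 \<le> Fd h (Some q) (Some v)"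
        proof
          fix v assume v: "v \<in> Vset h j B"
          have "q \<notin> Vset h j B" using qB True by (auto simp: Vset_def)
          then have "Some q \<noteq> Some v" using v by auto
          then show "1 \<le> Fd h (Some q) (Some v)" using Fd_pos[of h "Some q" "Some v"] vq Vmem[OF v] h
            by (auto simp: vv_def)
        qed
        ultimately show ?thesis using d by auto
      qed
    next
      case False2: False
      then have nlt: "h - j < n" using False lq nh jh by auto
      define a where "a = take (h - j) q"
      have la: "length a = h - j" using nlt by (simp add: a_def n_def)
      have va: "valid_path h a" using valid_take[OF vq] by (simp add: a_def)
      have lcpa: "lcp q a = h - j" using lcp_take_self[of "h-j" q] nlt by (simp add: a_def n_def)
      have dd: "delta h j B (Some q) = (if a \<in> B then n - (h - j) else n - (h - j) + 1)"
        using False False2 lq nlt nh jh by (auto simp: delta_def a_def)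
      have lower0: "n - (h - j) \<le> Fd h (Some q) (Some v)" if v: "v \<in> Vset h j B" for v
      proof -
        have m: "length v \<le> h - j" using Vmem[OF v] by auto
        have "lcp q v \<le> length v" "lcp q v \<le> n" using lcp_le1[of q v] lcp_le2[of q v] by (auto simp: n_def)
        moreover have "n - (h - j) \<le> 2*h - n - length v" using m nh nlt by linarith
        moreover have "n - (h - j) \<le> n + length v - 2 * lcp q v" using m nh nlt \<open>lcp q v \<le> length v\<close> by linarith
        ultimately show ?thesis by (simp add: Fd_SS n_def min.bounded_iff)
      qed
      show ?thesis
      proof (cases "a \<in> B")
        case True
        have "a \<in> Vset h j B" using True by (simp add: Vset_def)
        moreover have "Fd h (Some q) (Some a) = n - (h - j)"
        proof -
          have "n + length a - 2 * lcp q a = n - (h - j)" using lcpa la nlt by linarith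
          moreover have "n - (h - j) \<le> 2*h - n - length a" using la nh nlt by linarith
          ultimately show ?thesis by (simp add: Fd_SS n_def min_def)
        qed
        ultimately show ?thesis using dd True lower0 by auto
      next
        case aB: False
        have jlt: "j < h"
        proof (rule ccontr)
          assume "\<not> j < h" then have "j = h" using jh by auto
          then have "a = []" using la by simp
          moreover obtain b where "b \<in> B" using ne \<open>j = h\<close> by auto
          ultimately show False using jh_B[OF \<open>j = h\<close>] aB by auto
        qed
        define v where "v = take (h - j - 1) q"
        have vv: "valid_path h v" using valid_take[OF vq] by (simp add: v_def)
        have lv: "length v = h - j - 1" using nlt by (simp add: v_def n_def)
        have "v \<in> Vset h j B" using vv lv jlt by (auto simp: Vset_def VP_def level_def)
        moreover have "Fd h (Some q) (Some v) = n - (h - j) + 1"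
        proof -
          have "lcp q v = h - j - 1" using lcp_take_self[of "h-j-1" q] nlt by (simp add: v_def n_def)
          then have "n + length v - 2 * lcp q v = n - (h - j) + 1" using lv nlt jlt by linarith
          moreover have "n - (h - j) + 1 \<le> 2*h - n - length v" using lv nh nlt jlt by linarith
          ultimately show ?thesis by (simp add: Fd_SS n_def min_def)
        qed
        moreover have "n - (h - j) + 1 \<le> Fd h (Some q) (Some v)" if v: "v \<in> Vset h j B" for v
        proof (rule ccontr)
          assume A: "\<not> ?thesis"
          have m: "length v \<le> h - j" and vin: "length v = h - j \<longrightarrow> v \<in> B" using Vmem[OF v] by auto
          have L: "lcp q v \<le> length v" "lcp q v \<le> n" using lcp_le1[of q v] lcp_le2[of q v] by (auto simp: n_def)
          have M: "n - (h - j) + 1 \<le> 2*h - n - length v" using m nh nlt by simp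
          have "Fd h (Some q) (Some v) < n - (h - j) + 1" using A by linarith
          then have "min (n + length v - 2 * lcp q v) (2*h - n - length v) < n - (h - j) + 1"
            unfolding Fd_SS n_def .
          then have "n + length v - 2 * lcp q v < n - (h - j) + 1"
            using M by (simp add: min_less_iff_disj)
          then have "lcp q v = length v" "length v = h - j" using L m nlt by auto
          then have "v = a" using lcp_full[of q v] by (simp add: a_def)
          then show False using vin \<open>length v = h - j\<close> aB by auto
        qed
        ultimately show ?thesis using dd aB by auto
      qed
    qed
  qed
qed

lemma dist_S:
  assumes ne: "B \<noteq> {} \<or> j < h" and x: "x \<in> Xh h"
  shows "dist_set (ch h) x (Spts h j B) = real (delta h j B (fst x))"
proof -
  have vx: "vv h (fst x)" using Xh_vv[OF x] .
  have img: "(\<lambda>f. ch h x f) ` Spts h j B = (\<lambda>v. real (Fd h (fst x) (Some v))) ` Vset h j B"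
    unfolding Spts_def image_image
  proof (rule image_cong[OF refl])
    fix v assume "v \<in> Vset h j B"
    then have "vv h (Some v)" using Vmem by (auto simp: vv_def)
    then show "ch h x (Some v, 0) = real (Fd h (fst x) (Some v))" using ch_eq[of h x "(Some v, 0)"] vx h by simp
  qed
  have ex: "\<exists>v\<in>Vset h j B. Fd h (fst x) (Some v) = delta h j B (fst x)"
    and lo: "\<forall>v\<in>Vset h j B. delta h j B (fst x) \<le> Fd h (fst x) (Some v)"
  proof -
    have "(\<exists>v\<in>Vset h j B. Fd h (fst x) (Some v) = delta h j B (fst x)) \<and> (\<forall>v\<in>Vset h j B. delta h j B (fst x) \<le> Fd h (fst x) (Some v))"
    proof (cases "fst x")
      case None then show ?thesis using min_None[OF ne] by simp
    next
      case (Some q) then show ?thesis using min_Some[OF ne, of q] vx by (simp add: vv_def)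
    qed
    then show "\<exists>v\<in>Vset h j B. Fd h (fst x) (Some v) = delta h j B (fst x)"
      "\<forall>v\<in>Vset h j B. delta h j B (fst x) \<le> Fd h (fst x) (Some v)" by auto
  qed
  obtain v0 where v0: "v0 \<in> Vset h j B" "Fd h (fst x) (Some v0) = delta h j B (fst x)" using ex by blast
  show ?thesis unfolding dist_set_def img
  proof (rule Min_eqI)
    show "finite ((\<lambda>v. real (Fd h (fst x) (Some v))) ` Vset h j B)" using finV by simp
    show "\<And>y. y \<in> (\<lambda>v. real (Fd h (fst x) (Some v))) ` Vset h j B \<Longrightarrow> real (delta h j B (fst x)) \<le> y"
      using lo by auto
    show "real (delta h j B (fst x)) \<in> (\<lambda>v. real (Fd h (fst x) (Some v))) ` Vset h j B"
      using v0 by (intro rev_image_eqI[of v0]) auto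
  qed
qed

lemma cost_S:
  assumes ne: "B \<noteq> {} \<or> j < h"
  shows "cost (Xh h) (ch h) (Spts h j B) = (\<Sum>x\<in>Xh h. real (delta h j B (fst x)))"
  unfolding cost_def by (rule sum.cong) (use dist_S[OF ne] in auto)

end

lemma delta_diff:
  assumes s: "cfg h j B" and a: "a \<in> B" and u: "vv h u"
  shows "real (delta h j (B - {a}) u) = real (delta h j B u) + (if u \<in> Some ` subtree h a then 1 else 0) + (if u = None \<and> B = {a} then 1 else 0)"
proof -
  interpret cfg h j B by (rule s)
  have la: "length a = h - j" and va: "valid_path h a" using Bmem[OF a] by auto
  show ?thesis
  proof (cases u)
    case None
    then show ?thesis using a by (auto simp: delta_def)
  next
    case (Some q)
    then have vq: "valid_path h q" using u by (simp add: vv_def)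
    have mem: "(Some q \<in> Some ` subtree h a) = (take (h - j) q = a)"
      using vq la by (auto simp: subtree_def VP_def)
    have nh: "length q \<le> h - 1" using valid_len[OF vq] .
    show ?thesis
    proof (cases "j < level h q")
      case True
      then have "length q < h - j" by (auto simp: level_def)
      then have "take (h - j) q \<noteq> a" using la by auto
      then show ?thesis using True Some mem by (simp add: delta_def)
    next
      case False
      show ?thesis
      proof (cases "level h q = j")
        case True
        then have "length q = h - j" using nh jh by (auto simp: level_def)
        then have "take (h - j) q = q" by simp
        then show ?thesis using True Some mem a by (auto simp: delta_def)
      next
        case False2: False
        then show ?thesis using False Some mem a by (auto simp: delta_def)
      qed
    qed
  qed
qed

lemma sum_ind_subtree:
  assumes "h \<ge> 1" "valid_path h a"
  shows "(\<Sum>x\<in>Xh h. (if fst x \<in> Some ` subtree h a then 1 else 0 :: real)) = sub wt (level h a)"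
proof -
  have "(\<Sum>x\<in>Xh h. (if fst x \<in> Some ` subtree h a then 1 else 0 :: real))
      = (\<Sum>p\<in>VP h. (fact (level h p))^3 * (if Some p \<in> Some ` subtree h a then 1 else 0)) + 0"
    using sum_Xh[of "\<lambda>u. if u \<in> Some ` subtree h a then 1 else 0" h] by simp
  also have "\<dots> = (\<Sum>p\<in>VP h. if p \<in> subtree h a then wt (level h p) else 0)"
    by (auto simp: wt_def intro!: sum.cong)
  also have "\<dots> = (\<Sum>p\<in>VP h \<inter> subtree h a. wt (level h p))"
    by (rule sum.inter_restrict[symmetric]) (rule finite_VP)
  also have "VP h \<inter> subtree h a = subtree h a" by (auto simp: subtree_def)
  also have "(\<Sum>p\<in>subtree h a. wt (level h p)) = sub wt (level h a)"
    by (rule subtree_sum[OF assms])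
  finally show ?thesis .
qed

lemma cost_remove_B:
  assumes s: "cfg h j B" and a: "a \<in> B" and ne: "B \<noteq> {a} \<or> j < h"
  shows "cost (Xh h) (ch h) (Spts h j (B - {a})) = cost (Xh h) (ch h) (Spts h j B) + sub wt j + (if B = {a} then 1 else 0)"
proof -
  interpret cfg h j B by (rule s)
  have s2: "cfg h j (B - {a})" using s unfolding cfg_def by auto
  have ne2: "B - {a} \<noteq> {} \<or> j < h" using ne a by auto
  have la: "level h a = j" and va: "valid_path h a" using B a by (auto simp: VP_def)
  have "cost (Xh h) (ch h) (Spts h j (B - {a})) = (\<Sum>x\<in>Xh h. real (delta h j (B - {a}) (fst x)))"
    using cfg.cost_S[OF s2 ne2] .
  also have "\<dots> = (\<Sum>x\<in>Xh h. real (delta h j B (fst x)) + (if fst x \<in> Some ` subtree h a then 1 else 0) + (if fst x = None \<and> B = {a} then 1 else 0))"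
    by (rule sum.cong[OF refl]) (rule delta_diff[OF s a Xh_vv])
  also have "\<dots> = (\<Sum>x\<in>Xh h. real (delta h j B (fst x))) + (\<Sum>x\<in>Xh h. (if fst x \<in> Some ` subtree h a then 1 else 0)) + (\<Sum>x\<in>Xh h. (if fst x = None \<and> B = {a} then 1 else 0))"
    by (simp add: sum.distrib)
  also have "(\<Sum>x\<in>Xh h. real (delta h j B (fst x))) = cost (Xh h) (ch h) (Spts h j B)"
  proof -
    have "B \<noteq> {} \<or> j < h" using a by auto
    then show ?thesis using cost_S by simp
  qed
  also have "(\<Sum>x\<in>Xh h. (if fst x \<in> Some ` subtree h a then 1 else 0)) = sub wt j"
    using sum_ind_subtree[OF h va] la by simp
  also have "(\<Sum>x\<in>Xh h. (if fst x = None \<and> B = {a} then 1 else 0 :: real)) = (if B = {a} then 1 else 0)"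
    using sum_Xh[of "\<lambda>u. if u = None \<and> B = {a} then 1 else 0" h] by simp
  finally show ?thesis .
qed



lemma dist_le: "finite F \<Longrightarrow> f \<in> F \<Longrightarrow> dist_set c x F \<le> c x f"
  unfolding dist_set_def by (rule Min_le) auto

lemma ch_nonneg: "ch h x y \<ge> 0"
  by (simp add: ch_def)

lemma dist_nonneg: "finite F \<Longrightarrow> F \<noteq> {} \<Longrightarrow> dist_set (ch h) x F \<ge> 0"
  unfolding dist_set_def by (subst Min_ge_iff) (auto simp: ch_nonneg)

lemma cost_nonneg: "finite F \<Longrightarrow> F \<noteq> {} \<Longrightarrow> cost X (ch h) F \<ge> 0"
  unfolding cost_def by (rule sum_nonneg) (rule dist_nonneg)

lemma cost_remove_ge:
  assumes h: "h \<ge> 1" and F: "F \<subseteq> Xh h" and r: "r \<in> F" and ne: "F - {r} \<noteq> {}"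
    and uniq: "\<forall>f\<in>F. fst f = fst r \<longrightarrow> f = r"
  shows "cost (Xh h) (ch h) F + (\<Sum>x\<in>Xh h. if fst x = fst r then 1 else 0) \<le> cost (Xh h) (ch h) (F - {r})"
proof -
  have finF: "finite F" using finite_Xh F finite_subset by blast
  have "\<forall>x\<in>Xh h. dist_set (ch h) x F + (if fst x = fst r then 1 else 0) \<le> dist_set (ch h) x (F - {r})"
  proof
    fix x assume x: "x \<in> Xh h"
    show "dist_set (ch h) x F + (if fst x = fst r then 1 else 0) \<le> dist_set (ch h) x (F - {r})"
    proof (cases "fst x = fst r")
      case True
      have "dist_set (ch h) x F \<le> ch h x r" by (rule dist_le[OF finF r])
      also have "ch h x r = 0" using True by (simp add: ch_def)
      finally have d0: "dist_set (ch h) x F \<le> 0" .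
      have "1 \<le> dist_set (ch h) x (F - {r})" unfolding dist_set_def
      proof (subst Min_ge_iff)
        show "finite ((\<lambda>f. ch h x f) ` (F - {r}))" using finF by simp
        show "(\<lambda>f. ch h x f) ` (F - {r}) \<noteq> {}" using ne by simp
        show "\<forall>a\<in>(\<lambda>f. ch h x f) ` (F - {r}). 1 \<le> a"
        proof
          fix a assume "a \<in> (\<lambda>f. ch h x f) ` (F - {r})"
          then obtain f where f: "f \<in> F" "f \<noteq> r" "a = ch h x f" by auto
          then have ne2: "fst x \<noteq> fst f" using uniq True by auto
          have vf: "vv h (fst f)" using Xh_vv[of f h] f F by auto
          have vx: "vv h (fst x)" using Xh_vv x by auto
          have "1 \<le> Fd h (fst x) (fst f)" by (rule Fd_pos[OF vx vf ne2 h])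
          then show "1 \<le> a" using f ch_eq[OF vx vf h] by simp
        qed
      qed
      then show ?thesis using True d0 by simp
    next
      case False
      have "Min ((\<lambda>f. ch h x f) ` F) \<le> Min ((\<lambda>f. ch h x f) ` (F - {r}))"
        by (rule Min_antimono) (use finF ne in auto)
      then show ?thesis using False by (simp add: dist_set_def)
    qed
  qed
  then have "(\<Sum>x\<in>Xh h. dist_set (ch h) x F + (if fst x = fst r then 1 else 0)) \<le> (\<Sum>x\<in>Xh h. dist_set (ch h) x (F - {r}))"
    by (intro sum_mono) auto
  then show ?thesis by (simp add: cost_def sum.distrib)
qed

lemma run_exists:
  fixes X :: "'a set" and sig :: "'a \<Rightarrow> nat"
  assumes fin: "finite X"
    and good: "\<And>s B r r'. B \<subseteq> {x\<in>X. sig x = s} \<Longrightarrow> r \<in> B \<Longrightarrow> 2 \<le> card ({x\<in>X. sig x < s} \<union> B)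
        \<Longrightarrow> r' \<in> {x\<in>X. sig x < s} \<union> B
        \<Longrightarrow> cost X c ({x\<in>X. sig x < s} \<union> B - {r}) \<le> cost X c ({x\<in>X. sig x < s} \<union> B - {r'})"
    and x0: "x0 \<in> X" and x0min: "\<And>x. x \<in> X \<Longrightarrow> x \<noteq> x0 \<Longrightarrow> sig x0 < sig x"
  shows "\<exists>R. reverse_greedy_run X c R \<and> R 1 = {x0}"
proof -
  obtain xs where xs: "distinct xs" "set xs = X" using finite_distinct_list[OF fin] by blast
  define L where "L = sort_key sig xs"
  have dL: "distinct L" and sL: "set L = X" and so: "sorted (map sig L)"
    using xs by (auto simp: L_def)
  have len: "length L = card X" using distinct_card[OF dL] sL by simp
  have mono: "sig (L ! i) \<le> sig (L ! k)" if "i \<le> k" "k < length L" for i k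
    using sorted_nth_mono[OF so, of i k] that by simp
  define R where "R t = set (take t L)" for t
  have "R (card X) = X" using len sL by (simp add: R_def)
  moreover have "\<forall>t. 2 \<le> t \<and> t \<le> card X \<longrightarrow>
        (\<exists>r\<in>R t. R (t - 1) = R t - {r} \<and> (\<forall>r'\<in>R t. cost X c (R t - {r}) \<le> cost X c (R t - {r'})))"
  proof (intro allI impI)
    fix t assume t: "2 \<le> t \<and> t \<le> card X"
    define r where "r = L ! (t - 1)"
    have tl: "t - 1 < length L" using t len by auto
    have st: "Suc (t - 1) = t" using t by arith
    have take_eq: "take t L = take (t - 1) L @ [r]"
      using take_Suc_conv_app_nth[OF tl] st by (simp add: r_def)
    have rnot: "r \<notin> set (take (t - 1) L)"
    proof
      assume "r \<in> set (take (t - 1) L)"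
      then obtain k where k: "k < t - 1" "take (t-1) L ! k = r" by (auto simp: in_set_conv_nth)
      then have "L ! k = L ! (t - 1)" using tl by (simp add: r_def)
      then show False using nth_eq_iff_index_eq[OF dL] k tl by auto
    qed
    have rin: "r \<in> R t" using take_eq by (simp add: R_def)
    have Rm: "R (t - 1) = R t - {r}" using take_eq rnot by (auto simp: R_def)
    define s where "s = sig r"
    define B where "B = {x \<in> R t. sig x = s}"
    have memR: "x \<in> R t \<longleftrightarrow> (\<exists>k<t. x = L ! k)" for x
      using tl by (auto simp: R_def in_set_conv_nth)
    have Rstate: "R t = {x\<in>X. sig x < s} \<union> B"
    proof
      show "R t \<subseteq> {x\<in>X. sig x < s} \<union> B"
      proof
        fix x assume x: "x \<in> R t"
        then obtain k where k: "k < t" "x = L ! k" using memR by blast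
        have "sig x \<le> s" using mono[of k "t-1"] k tl by (simp add: s_def r_def)
        moreover have "x \<in> X" using x sL by (auto simp: R_def dest: in_set_takeD)
        ultimately show "x \<in> {x\<in>X. sig x < s} \<union> B" using x by (auto simp: B_def)
      qed
      show "{x\<in>X. sig x < s} \<union> B \<subseteq> R t"
      proof
        fix x assume x: "x \<in> {x\<in>X. sig x < s} \<union> B"
        show "x \<in> R t"
        proof (cases "x \<in> B")
          case True then show ?thesis by (simp add: B_def)
        next
          case False
          then have xX: "x \<in> X" and lt: "sig x < s" using x by auto
          then obtain k where k: "k < length L" "x = L ! k" using sL by (auto simp: in_set_conv_nth)
          have "k < t"
          proof (rule ccontr)
            assume "\<not> k < t"
            then have "sig r \<le> sig x" using mono[of "t-1" k] k by (simp add: r_def)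
            then show False using lt by (simp add: s_def)
          qed
          then show ?thesis using memR k by blast
        qed
      qed
    qed
    have Bsub: "B \<subseteq> {x\<in>X. sig x = s}" using sL by (auto simp: B_def R_def dest: in_set_takeD)
    have rB: "r \<in> B" using rin by (simp add: B_def s_def)
    have cardR: "card (R t) = t" using dL tl by (simp add: R_def distinct_card[OF distinct_take[OF dL]])
    have "\<forall>r'\<in>R t. cost X c (R t - {r}) \<le> cost X c (R t - {r'})"
      using good[OF Bsub rB] cardR t Rstate by auto
    then show "\<exists>r\<in>R t. R (t - 1) = R t - {r} \<and> (\<forall>r'\<in>R t. cost X c (R t - {r}) \<le> cost X c (R t - {r'}))"
      using rin Rm by blast
  qed
  ultimately have run: "reverse_greedy_run X c R" unfolding reverse_greedy_run_def by blast
  have ne: "L \<noteq> []" using x0 sL by auto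
  have "L ! 0 = x0"
  proof (rule ccontr)
    assume A: "L ! 0 \<noteq> x0"
    obtain k where k: "k < length L" "x0 = L ! k" using x0 sL by (auto simp: in_set_conv_nth)
    have "sig (L ! 0) \<le> sig x0" using mono[of 0 k] k by simp
    moreover have "L ! 0 \<in> X" using ne sL nth_mem by blast
    ultimately show False using x0min A by fastforce
  qed
  then have "R 1 = {x0}" using ne by (cases L) (auto simp: R_def)
  then show ?thesis using run by blast
qed



definition sig :: "nat \<Rightarrow> point \<Rightarrow> nat" where
  "sig h x = (case x of (None, _) \<Rightarrow> h + 1 | (Some p, i) \<Rightarrow> if i = 0 then length p + 1 else h + 2)"

lemma Xh_cases:
  assumes "x \<in> Xh h"
  obtains "x = (None, 0)" | p i where "x = (Some p, i)" "valid_path h p" "i < fact (level h p) ^ 3"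
  using assms unfolding Xh_def by auto

lemma rep_in: "valid_path h p \<Longrightarrow> (Some p, 0) \<in> Xh h"
  unfolding Xh_def by auto

lemma mu_in: "(None, 0) \<in> Xh h"
  unfolding Xh_def by auto

lemma cluster_sum:
  assumes "valid_path h b"
  shows "(\<Sum>x\<in>Xh h. if fst x = Some b then 1 else 0 :: real) = (fact (level h b))^3"
proof -
  have "(\<Sum>x\<in>Xh h. if fst x = Some b then 1 else 0 :: real)
     = (\<Sum>p\<in>VP h. (fact (level h p))^3 * (if Some p = Some b then 1 else 0)) + 0"
    using sum_Xh[of "\<lambda>u. if u = Some b then 1 else 0" h] by simp
  also have "\<dots> = (\<Sum>p\<in>VP h. if p = b then (fact (level h p))^3 else 0)"
    by (auto intro!: sum.cong)
  also have "\<dots> = (fact (level h b))^3" using assms finite_VP by (simp add: VP_def)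
  finally show ?thesis .
qed

lemma good:
  assumes h: "h \<ge> 1"
    and Bs: "B \<subseteq> {x\<in>Xh h. sig h x = s}" and rB: "r \<in> B"
    and card2: "2 \<le> card ({x\<in>Xh h. sig h x < s} \<union> B)"
    and r': "r' \<in> {x\<in>Xh h. sig h x < s} \<union> B"
  shows "cost (Xh h) (ch h) ({x\<in>Xh h. sig h x < s} \<union> B - {r}) \<le> cost (Xh h) (ch h) ({x\<in>Xh h. sig h x < s} \<union> B - {r'})"
proof -
  define R where "R = {x\<in>Xh h. sig h x < s} \<union> B"
  have RX: "R \<subseteq> Xh h" using Bs by (auto simp: R_def)
  have finR: "finite R" using finite_subset[OF RX finite_Xh] .
  have neR: "R - {y} \<noteq> {}" for y
  proof
    assume "R - {y} = {}"
    then have "R \<subseteq> {y}" by auto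
    then have "card R \<le> 1" using card_mono[of "{y}" R] by simp
    then show False using card2 by (simp add: R_def)
  qed
  have nonneg: "cost (Xh h) (ch h) (R - {y}) \<ge> 0" for y
    using cost_nonneg[of "R - {y}"] finR neR by auto
  have rX: "r \<in> Xh h" and sr: "sig h r = s" using Bs rB by auto
  have "cost (Xh h) (ch h) (R - {r}) \<le> cost (Xh h) (ch h) (R - {r'})"
  proof (cases "s \<ge> h + 2")
    case True
    obtain p i where rp: "r = (Some p, i)" "i \<noteq> 0"
      using rX sr True by (cases rule: Xh_cases[OF rX]) (auto simp: sig_def split: if_splits dest: valid_len)
    have "cost (Xh h) (ch h) (R - {r}) \<le> (\<Sum>x\<in>Xh h. 0)"
      unfolding cost_def
    proof (rule sum_mono)
      fix x assume x: "x \<in> Xh h"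
      have "(fst x, 0) \<in> R - {r}"
      proof (cases rule: Xh_cases[OF x])
        case 1 then show ?thesis using True rp by (auto simp: R_def sig_def mu_in)
      next
        case (2 q k) then show ?thesis using True rp rep_in[of h q] valid_len[of h q]
          by (auto simp: R_def sig_def)
      qed
      then have "dist_set (ch h) x (R - {r}) \<le> ch h x (fst x, 0)" using finR by (intro dist_le) auto
      then show "dist_set (ch h) x (R - {r}) \<le> 0" by (simp add: ch_def)
    qed
    then show ?thesis using nonneg[of r'] by simp
  next
    case False
    show ?thesis
    proof (cases "s = h + 1")
      case True
      have r0: "r = (None, 0)"
        using rX sr True h by (cases rule: Xh_cases[OF rX]) (auto simp: sig_def split: if_splits dest: valid_len)
      have c1: "cost (Xh h) (ch h) (R - {r}) \<le> 1"
      proof -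
        have "cost (Xh h) (ch h) (R - {r}) \<le> (\<Sum>x\<in>Xh h. if fst x = None then 1 else 0)"
          unfolding cost_def
        proof (rule sum_mono)
          fix x assume x: "x \<in> Xh h"
          show "dist_set (ch h) x (R - {r}) \<le> (if fst x = None then 1 else 0)"
          proof (cases rule: Xh_cases[OF x])
            case 1
            define l where "l = replicate (h - 1) (0::nat)"
            have vl: "valid_path h l" using valid_zeros[of h "[]" "h-1"] by (simp add: l_def valid_path_def)
            have "(Some l, 0) \<in> R - {r}" using rep_in[OF vl] True r0 h by (auto simp: R_def sig_def l_def)
            then have "dist_set (ch h) x (R - {r}) \<le> ch h x (Some l, 0)" using finR by (intro dist_le) auto
            also have "ch h x (Some l, 0) = 1" using 1 h vl hat_dist_eq[of h None "Some l"]
              by (simp add: ch_def vv_def Fd_def l_def)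
            finally show ?thesis using 1 by simp
          next
            case (2 q k)
            have "(Some q, 0) \<in> R - {r}" using 2 True r0 rep_in[of h q] valid_len[of h q] h
              by (auto simp: R_def sig_def)
            then have "dist_set (ch h) x (R - {r}) \<le> ch h x (Some q, 0)" using finR by (intro dist_le) auto
            then show ?thesis using 2 by (simp add: ch_def)
          qed
        qed
        also have "(\<Sum>x\<in>Xh h. if fst x = None then 1 else 0 :: real) = 1"
          using sum_Xh[of "\<lambda>u. if u = None then 1 else 0" h] by simp
        finally show ?thesis .
      qed
      show ?thesis
      proof (cases "r' = r")
        case True then show ?thesis by simp
      next
        case ne: False
        have r'X: "r' \<in> Xh h" using r' Bs by auto
        obtain b where b: "r' = (Some b, 0)" "valid_path h b"
        proof (cases rule: Xh_cases[OF r'X])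
          case 1 then show ?thesis using ne r0 by simp
        next
          case (2 q k)
          then have "k = 0" using r' Bs True by (auto simp: sig_def split: if_splits)
          then show ?thesis using 2 that by simp
        qed
        have uniq: "\<forall>f\<in>R. fst f = fst r' \<longrightarrow> f = r'"
        proof (intro ballI impI)
          fix f assume f: "f \<in> R" "fst f = fst r'"
          then have fX: "f \<in> Xh h" using RX by auto
          show "f = r'"
          proof (cases rule: Xh_cases[OF fX])
            case 1 then show ?thesis using f b by simp
          next
            case (2 q k)
            have "sig h f \<le> h + 1" using f(1) Bs True by (auto simp: R_def)
            then have "k = 0" using 2 by (simp add: sig_def split: if_splits)
            then show ?thesis using 2 f b by simp
          qed
        qed
        have "cost (Xh h) (ch h) R + (\<Sum>x\<in>Xh h. if fst x = fst r' then 1 else 0) \<le> cost (Xh h) (ch h) (R - {r'})"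
          by (rule cost_remove_ge[OF h RX _ neR uniq]) (use r' in \<open>simp add: R_def\<close>)
        moreover have "(\<Sum>x\<in>Xh h. if fst x = fst r' then 1 else 0 :: real) \<ge> 1"
          using cluster_sum[OF b(2)] b by simp
        moreover have "cost (Xh h) (ch h) R \<ge> 0" using cost_nonneg[OF finR] rB by (auto simp: R_def)
        ultimately show ?thesis using c1 by linarith
      qed
    next
      case False2: False
      have slt: "s \<le> h" using False False2 by simp
      have s1: "s \<ge> 1"
        using rX sr by (cases rule: Xh_cases[OF rX]) (auto simp: sig_def split: if_splits)
      define j where "j = h + 1 - s"
      define B' where "B' = {p. (Some p, 0) \<in> B}"
      have j: "1 \<le> j" "j \<le> h" using slt s1 by (auto simp: j_def)
      have BB: "B = (\<lambda>p. (Some p, 0::nat)) ` B'"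
      proof
        show "B \<subseteq> (\<lambda>p. (Some p, 0::nat)) ` B'"
        proof
          fix x assume x: "x \<in> B"
          then have xX: "x \<in> Xh h" and sx: "sig h x = s" using Bs by auto
          show "x \<in> (\<lambda>p. (Some p, 0::nat)) ` B'"
          proof (cases rule: Xh_cases[OF xX])
            case 1 then show ?thesis using sx slt by (simp add: sig_def)
          next
            case (2 q k)
            then have "k = 0" using sx slt by (auto simp: sig_def split: if_splits)
            then show ?thesis using 2 x by (auto simp: B'_def)
          qed
        qed
        show "(\<lambda>p. (Some p, 0::nat)) ` B' \<subseteq> B" by (auto simp: B'_def)
      qed
      have B'sub: "B' \<subseteq> {p \<in> VP h. level h p = j}"
      proof
        fix p assume "p \<in> B'"
        then have "(Some p, 0) \<in> Xh h" "sig h (Some p, 0) = s" using Bs by (auto simp: B'_def)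
        then show "p \<in> {p \<in> VP h. level h p = j}" using slt
          by (auto simp: Xh_def sig_def VP_def level_def j_def dest: valid_len)
      qed
      have cf: "cfg h j B'" using h j B'sub by (simp add: cfg_def)
      have RS: "R = Spts h j B'"
      proof -
        have "{x\<in>Xh h. sig h x < s} = (\<lambda>p. (Some p, 0::nat)) ` {p \<in> VP h. j < level h p}"
        proof
          show "{x\<in>Xh h. sig h x < s} \<subseteq> (\<lambda>p. (Some p, 0::nat)) ` {p \<in> VP h. j < level h p}"
          proof
            fix x assume x: "x \<in> {x\<in>Xh h. sig h x < s}"
            then have xX: "x \<in> Xh h" and sx: "sig h x < s" by auto
            show "x \<in> (\<lambda>p. (Some p, 0::nat)) ` {p \<in> VP h. j < level h p}"
            proof (cases rule: Xh_cases[OF xX])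
              case 1 then show ?thesis using sx slt by (simp add: sig_def)
            next
              case (2 q k)
              then have "k = 0" "length q + 1 < s" using sx slt by (auto simp: sig_def split: if_splits)
              then show ?thesis using 2 slt valid_len[OF 2(2)] by (auto simp: VP_def level_def j_def)
            qed
          qed
          show "(\<lambda>p. (Some p, 0::nat)) ` {p \<in> VP h. j < level h p} \<subseteq> {x\<in>Xh h. sig h x < s}"
          proof
            fix x assume "x \<in> (\<lambda>p. (Some p, 0::nat)) ` {p \<in> VP h. j < level h p}"
            then obtain p where p: "x = (Some p, 0)" "valid_path h p" "j < level h p" by (auto simp: VP_def)
            then show "x \<in> {x\<in>Xh h. sig h x < s}" using rep_in[OF p(2)] slt
              by (auto simp: sig_def level_def j_def)
          qed
        qed
        then show ?thesis unfolding R_def Spts_def Vset_def BB by (simp add: image_Un)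
      qed
      obtain a where a: "r = (Some a, 0)" "a \<in> B'" using rB BB by auto
      have jlt: "j < h"
      proof (rule ccontr)
        assume "\<not> j < h"
        then have jh: "j = h" using j by simp
        have "R \<subseteq> {(Some [], 0)}"
        proof
          fix x assume "x \<in> R"
          then obtain p where p: "x = (Some p, 0)" "p \<in> Vset h j B'" using RS by (auto simp: Spts_def)
          then have "length p \<le> h - j" using cfg.Vmem[OF cf] by auto
          then show "x \<in> {(Some [], 0)}" using p jh by simp
        qed
        then have "card R \<le> 1" using card_mono[of "{(Some [], 0)}" R] by simp
        then show False using card2 by (simp add: R_def)
      qed
      have rem: "Spts h j B' - {(Some b, 0)} = Spts h j (B' - {b})" if "b \<in> B'" for b
      proof -
        have "level h b = j" using that B'sub by auto
        then show ?thesis unfolding Spts_def Vset_def by auto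
      qed
      have ea: "R - {r} = Spts h j (B' - {a})" using RS a(1) rem[OF a(2)] by simp
      have ca: "cost (Xh h) (ch h) (R - {r}) = cost (Xh h) (ch h) R + sub wt j + (if B' = {a} then 1 else 0)"
      proof -
        have "cost (Xh h) (ch h) (R - {r}) = cost (Xh h) (ch h) (Spts h j (B' - {a}))" by (simp only: ea)
        also have "\<dots> = cost (Xh h) (ch h) (Spts h j B') + sub wt j + (if B' = {a} then 1 else 0)"
          by (rule cost_remove_B[OF cf a(2)]) (use jlt in simp)
        finally show ?thesis using RS by simp
      qed
      have r'X: "r' \<in> R" using r' by (simp add: R_def)
      then obtain b where b: "r' = (Some b, 0)" "b \<in> Vset h j B'" using RS by (auto simp: Spts_def)
      show ?thesis
      proof (cases "b \<in> B'")
        case True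
        show ?thesis
        proof (cases "b = a")
          case True then show ?thesis using a b by simp
        next
          case False
          have eb: "R - {r'} = Spts h j (B' - {b})" using RS b(1) rem[OF \<open>b \<in> B'\<close>] by simp
          have cb: "cost (Xh h) (ch h) (R - {r'}) = cost (Xh h) (ch h) R + sub wt j + (if B' = {b} then 1 else 0)"
          proof -
            have "cost (Xh h) (ch h) (R - {r'}) = cost (Xh h) (ch h) (Spts h j (B' - {b}))" by (simp only: eb)
            also have "\<dots> = cost (Xh h) (ch h) (Spts h j B') + sub wt j + (if B' = {b} then 1 else 0)"
              by (rule cost_remove_B[OF cf \<open>b \<in> B'\<close>]) (use jlt in simp)
            finally show ?thesis using RS by simp
          qed
          have "B' \<noteq> {a}" "B' \<noteq> {b}" using False a \<open>b \<in> B'\<close> by auto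
          then show ?thesis using ca cb by simp
        qed
      next
        case False
        have vb: "valid_path h b" and lb: "j < level h b"
          using b(2) False by (auto simp: Vset_def VP_def)
        have uniq: "\<forall>f\<in>R. fst f = fst r' \<longrightarrow> f = r'"
          using RS b by (auto simp: Spts_def)
        have "cost (Xh h) (ch h) R + (\<Sum>x\<in>Xh h. if fst x = fst r' then 1 else 0) \<le> cost (Xh h) (ch h) (R - {r'})"
          by (rule cost_remove_ge[OF h RX r'X neR uniq])
        moreover have "(\<Sum>x\<in>Xh h. if fst x = fst r' then 1 else 0 :: real) = (fact (level h b))^3"
          using cluster_sum[OF vb] b by simp
        moreover have "sub wt j + 1 \<le> (fact (j+1))^3" using sub_w_bound j by simp
        moreover have "(fact (j+1) :: real)^3 \<le> (fact (level h b))^3"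
          using lb by (intro power_mono fact_mono) auto
        moreover have "(if B' = {a} then 1 else 0 :: real) \<le> 1" by simp
        ultimately show ?thesis using ca by linarith
      qed
    qed
  qed
  then show ?thesis by (simp add: R_def)
qed



lemma dist_single: "dist_set c x {y} = c x y"
  by (simp add: dist_set_def)

lemma cost_single: "cost X c {y} = (\<Sum>x\<in>X. c x y)"
  by (simp add: cost_def dist_single)

lemma card_bound:
  assumes h: "h \<ge> 1"
  shows "card (Xh h) \<le> fact (h + 1) ^ 3"
proof -
  have "real (card (Xh h)) = (\<Sum>x\<in>Xh h. (\<lambda>u. 1::real) (fst x))" by simp
  also have "\<dots> = (\<Sum>p\<in>VP h. (fact (level h p))^3 * 1) + 1" by (rule sum_Xh)
  also have "(\<Sum>p\<in>VP h. (fact (level h p) :: real)^3 * 1) = (\<Sum>p\<in>subtree h []. wt (level h p))"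
    by (simp add: subtree_root wt_def)
  also have "\<dots> = sub wt h" using subtree_sum[OF h, of "[]" wt] by (simp add: level_root valid_path_def)
  finally have "real (card (Xh h)) = sub wt h + 1" .
  then have "real (card (Xh h)) \<le> (fact (h+1))^3" using sub_w_bound[OF h] by linarith
  then have "real (card (Xh h)) \<le> real (fact (h + 1) ^ 3)" by (simp only: of_nat_power of_nat_fact)
  then show ?thesis by (simp only: of_nat_le_iff)
qed

lemma cost_mu:
  assumes h: "h \<ge> 1"
  shows "cost (Xh h) (ch h) {mu} = sub wl h"
proof -
  have "cost (Xh h) (ch h) {mu} = (\<Sum>x\<in>Xh h. (\<lambda>u. real (Fd h u None)) (fst x))"
    unfolding cost_single
    by (rule sum.cong[OF refl]) (use h Xh_vv in \<open>auto simp: mu_def ch_eq vv_def\<close>)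
  also have "\<dots> = (\<Sum>p\<in>VP h. (fact (level h p))^3 * real (Fd h (Some p) None)) + real (Fd h None None)"
    by (rule sum_Xh)
  also have "\<dots> = (\<Sum>p\<in>subtree h []. wl (level h p))"
    by (simp add: subtree_root wl_def Fd_def level_def)
  also have "\<dots> = sub wl h" using subtree_sum[OF h, of "[]" wl] by (simp add: level_root valid_path_def)
  finally show ?thesis .
qed

lemma cost_rho:
  assumes h: "h \<ge> 2"
  shows "cost (Xh h) (ch h) {rho} \<ge> (real h - 1) * fact (h + 1) ^ 3 / 8"
proof -
  have h1: "h \<ge> 1" using h by simp
  have vr: "vv h (Some [])" by (simp add: vv_def valid_path_def)
  have "cost (Xh h) (ch h) {rho} = (\<Sum>x\<in>Xh h. (\<lambda>u. real (Fd h u (Some []))) (fst x))"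
    unfolding cost_single
    by (rule sum.cong[OF refl]) (use h1 Xh_vv vr in \<open>auto simp: rho_def ch_eq\<close>)
  also have "\<dots> = (\<Sum>p\<in>VP h. (fact (level h p))^3 * real (Fd h (Some p) (Some []))) + real (Fd h None (Some []))"
    by (rule sum_Xh)
  also have "\<dots> \<ge> (\<Sum>p\<in>VP h. (real h - 1) * ind1 (level h p))"
  proof -
    have "(\<Sum>p\<in>VP h. (real h - 1) * ind1 (level h p)) \<le> (\<Sum>p\<in>VP h. (fact (level h p))^3 * real (Fd h (Some p) (Some [])))"
    proof (rule sum_mono)
      fix p assume "p \<in> VP h"
      then have lp: "length p \<le> h - 1" by (auto simp: VP_def valid_path_def)
      show "(real h - 1) * ind1 (level h p) \<le> (fact (level h p))^3 * real (Fd h (Some p) (Some []))"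
      proof (cases "level h p = 1")
        case True
        then have "length p = h - 1" using lp by (simp add: level_def)
        then have "Fd h (Some p) (Some []) = h - 1" using h by (simp add: Fd_def)
        then show ?thesis using True h by (simp add: ind1_def of_nat_diff)
      next
        case False then show ?thesis by (simp add: ind1_def)
      qed
    qed
    then show ?thesis by simp
  qed
  also have "(\<Sum>p\<in>VP h. (real h - 1) * ind1 (level h p)) = (real h - 1) * sub ind1 h"
  proof -
    have s1: "(\<Sum>p\<in>VP h. ind1 (level h p)) = sub ind1 h"
      using subtree_sum[OF h1, of "[]" ind1] by (simp add: subtree_root level_root valid_path_def)
    show ?thesis by (metis s1 sum_distrib_left)
  qed
  also have "sub ind1 h = (fact (h + 1))^3 / 8"
  proof -
    obtain n where "h = Suc n" using h1 by (cases h) auto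
    then show ?thesis using sub_ind[of n] by simp
  qed
  finally show ?thesis by simp
qed

lemma sig_rho: "h \<ge> 1 \<Longrightarrow> x \<in> Xh h \<Longrightarrow> x \<noteq> rho \<Longrightarrow> sig h rho < sig h x"
  by (erule Xh_cases) (auto simp: sig_def rho_def)

theorem mainTheorem5:
  fixes h :: nat
  assumes "h \<ge> 2"
  shows "card (Xh h) \<le> fact (h + 1) ^ 3
    \<and> (\<exists>R. reverse_greedy_run (Xh h) (ch h) R \<and>
          (\<exists>x. R 1 = {x} \<and> fst x = Some []) \<and>
          cost (Xh h) (ch h) (R 1) / Min ((\<lambda>x. cost (Xh h) (ch h) {x}) ` Xh h)
            \<ge> (real h - 1) / 8)
    \<and> cost (Xh h) (ch h) {mu} < fact (h + 1) ^ 3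
    \<and> cost (Xh h) (ch h) {rho} \<ge> (real h - 1) * fact (h + 1) ^ 3 / 8"
proof -
  have h1: "h \<ge> 1" using assms by simp
  have rhoX: "rho \<in> Xh h" by (simp add: rho_def rep_in valid_path_def)
  have muX: "mu \<in> Xh h" by (simp add: mu_def mu_in)
  have cmu: "cost (Xh h) (ch h) {mu} < fact (h + 1) ^ 3"
    using cost_mu[OF h1] sub_wl_bound[OF h1] by simp
  have crho: "cost (Xh h) (ch h) {rho} \<ge> (real h - 1) * fact (h + 1) ^ 3 / 8"
    by (rule cost_rho[OF assms])
  obtain R where run: "reverse_greedy_run (Xh h) (ch h) R" and R1: "R 1 = {rho}"
    using run_exists[where sig="sig h" and c="ch h", OF finite_Xh good[OF h1] rhoX sig_rho[OF h1]] by blast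
  define m where "m = Min ((\<lambda>x. cost (Xh h) (ch h) {x}) ` Xh h)"
  have fin: "finite ((\<lambda>x. cost (Xh h) (ch h) {x}) ` Xh h)" using finite_Xh by simp
  have mle: "m \<le> cost (Xh h) (ch h) {mu}" unfolding m_def using fin muX by (intro Min_le) auto
  have mpos: "m > 0"
    unfolding m_def
  proof (subst Min_gr_iff)
    show "finite ((\<lambda>x. cost (Xh h) (ch h) {x}) ` Xh h)" by (rule fin)
    show "(\<lambda>x. cost (Xh h) (ch h) {x}) ` Xh h \<noteq> {}" using muX by auto
    show "\<forall>a\<in>(\<lambda>x. cost (Xh h) (ch h) {x}) ` Xh h. 0 < a"
    proof
      fix a assume "a \<in> (\<lambda>x. cost (Xh h) (ch h) {x}) ` Xh h"
      then obtain x where x: "x \<in> Xh h" "a = cost (Xh h) (ch h) {x}" by auto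
      define y where "y = (if fst x = None then rho else mu)"
      have yX: "y \<in> Xh h" using rhoX muX by (simp add: y_def)
      have ne: "fst y \<noteq> fst x" by (cases "fst x") (auto simp: y_def rho_def mu_def)
      have "1 \<le> Fd h (fst y) (fst x)" by (rule Fd_pos[OF Xh_vv[OF yX] Xh_vv[OF x(1)] ne h1])
      then have "1 \<le> ch h y x" using ch_eq[OF Xh_vv[OF yX] Xh_vv[OF x(1)] h1] by simp
      also have "ch h y x \<le> (\<Sum>z\<in>Xh h. ch h z x)"
        by (rule member_le_sum[OF yX]) (auto simp: ch_nonneg finite_Xh)
      finally show "0 < a" using x by (simp add: cost_single)
    qed
  qed
  have ratio: "(real h - 1) / 8 \<le> cost (Xh h) (ch h) (R 1) / m"
  proof -
    have F: "(fact (h + 1) :: real) ^ 3 > 0" by simp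
    have hh: "real h - 1 \<ge> 0" using h1 by simp
    have "(real h - 1) / 8 * m \<le> (real h - 1) / 8 * cost (Xh h) (ch h) {mu}"
      using mle hh by (intro mult_left_mono) auto
    also have "\<dots> \<le> (real h - 1) / 8 * fact (h + 1) ^ 3"
      using cmu hh by (intro mult_left_mono) auto
    also have "\<dots> \<le> cost (Xh h) (ch h) {rho}" using crho by simp
    finally have "(real h - 1) / 8 * m \<le> cost (Xh h) (ch h) (R 1)" using R1 by simp
    then show ?thesis using mpos by (simp add: pos_le_divide_eq)
  qed
  show ?thesis
    using card_bound[OF h1] run R1 ratio cmu crho by (auto simp: m_def rho_def)
qed


end
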